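(* The function $\phi$ is twice differentiable on $(0,1)$ and satisfies $0 < \phi''(u) < \phi'(u)/u$ for all $u \in (0,1)$.
   Context: $\log$ denotes the base-2 logarithm and $\ln$ the natural logarithm. Let $h(q) = -q\log q - (1-q)\log(1-q)$ be the binary entropy function on $[0,1]$ (with $0\log 0 = 0$). Define $\phi:[0,1]\to[0,1]$ by $\phi(u) = h\bigl(\tfrac{1-\sqrt{1-u^2}}{2}\bigr)$. *)

theory Defs
  imports "HOL-Analysis.Analysis"
begin

definition bin_entropy :: "real \<Rightarrow> real" where
  "bin_entropy q = (if q = 0 \<or> q = 1 then 0
      else - q * log 2 q - (1 - q) * log 2 (1 - q))"

definition phi :: "real \<Rightarrow> real" where
  "phi u = bin_entropy ((1 - sqrt (1 - u\<^sup>2)) / 2)"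

end

theory Submission
  imports Defs
begin

lemma hHgen:
  assumes "0 < q" "q < (1::real)"
  shows "((\<lambda>q. (-q*ln q - (1-q)*ln(1-q))/ln 2) has_real_derivative (ln(1-q) - ln q)/ln 2) (at q)"
  using assms by (auto intro!: derivative_eq_intros)

lemma d1:
  assumes u: "0 < u" "u < (1::real)"
  shows "((\<lambda>u. (-((1 - sqrt(1-u\<^sup>2))/2)*ln ((1 - sqrt(1-u\<^sup>2))/2)
          - (1-(1 - sqrt(1-u\<^sup>2))/2)*ln (1-(1 - sqrt(1-u\<^sup>2))/2))/ln 2)
     has_real_derivative u * (ln (1 + sqrt(1-u\<^sup>2)) - ln (1 - sqrt(1-u\<^sup>2))) / (2 * sqrt(1-u\<^sup>2) * ln 2)) (at u)"
proof -
  define s where "s = sqrt(1-u\<^sup>2)"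
  have s0: "0 < s" "s < 1" using u unfolding s_def by (auto simp: power_less_one_iff real_sqrt_less_iff)
  have ss: "s^2 = 1 - u^2" unfolding s_def using u by (simp add: abs_square_less_1 less_imp_le)
  have p: "((\<lambda>u. 1 - u\<^sup>2) has_real_derivative -(2*u)) (at u)"
    by (auto intro!: derivative_eq_intros)
  have sq: "((\<lambda>u. sqrt(1-u\<^sup>2)) has_real_derivative -u/s) (at u)"
    using DERIV_chain2[OF DERIV_real_sqrt p] u s0 unfolding s_def
    by (auto simp: field_simps abs_square_less_1)
  have hq: "((\<lambda>u. (1 - sqrt(1-u\<^sup>2))/2) has_real_derivative u/(2 * s)) (at u)"
    using DERIV_cdivide[OF DERIV_diff[OF DERIV_const[of "1::real"] sq], where c=2] by (simp add: field_simps)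
  define H where "H = (\<lambda>q::real. (-q*ln q - (1-q)*ln(1-q))/ln 2)"
  have qv: "0 < (1-s)/2" "(1-s)/2 < 1" using s0 by auto
  have hH: "(H has_real_derivative (ln (1-(1-s)/2) - ln ((1-s)/2))/ln 2) (at ((1-s)/2))"
    unfolding H_def using hHgen[OF qv] .
  have ch: "((\<lambda>u. H ((1 - sqrt(1-u\<^sup>2))/2)) has_real_derivative (ln (1-(1-s)/2) - ln ((1-s)/2))/ln 2 * (u/(2 * s))) (at u)"
    using DERIV_chain2[OF hH[unfolded s_def] hq[unfolded s_def]] unfolding s_def .
  have a: "1-(1-s)/2 = (1+s)/2" by (simp add: field_simps)
  have b: "ln ((1+s)/2) = ln(1+s) - ln 2" using s0 by (intro ln_divide_pos) auto
  have c: "ln ((1-s)/2) = ln(1-s) - ln 2" using s0 by (intro ln_divide_pos) auto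
  have e: "(ln (1-(1-s)/2) - ln ((1-s)/2))/ln 2 * (u/(2 * s)) = u * (ln (1 + s) - ln (1 - s)) / (2 * s * ln 2)"
    unfolding a b c by (simp add: mult.commute mult.left_commute)
  from ch[unfolded e] show ?thesis unfolding H_def s_def .
qed

lemma N_gt:
  assumes "0 < s" "s < (1::real)"
  shows "2 * s < ln (1 + s) - ln (1 - s)"
proof -
  let ?g = "\<lambda>x::real. ln (1 + x) - ln (1 - x) - 2 * x"
  have "?g 0 < ?g s"
  proof (rule DERIV_pos_imp_increasing_open[OF assms(1)])
    fix x assume x: "0 < x" "x < s"
    have "(?g has_real_derivative 1/(1+x) + 1/(1-x) - 2) (at x)"
      using x assms by (auto intro!: derivative_eq_intros)
    moreover have "1/(1+x) + 1/(1-x) - 2 > 0"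
    proof -
      have h1: "1+x \<noteq> 0" "1-x \<noteq> 0" using x assms by auto
      have "1/(1+x) + 1/(1-x) - 2 = 2*x^2/((1+x)*(1-x))" using h1
        by (simp add: divide_simps) (simp add: algebra_simps power2_eq_square)
      also have "\<dots> > 0" using x assms by (intro divide_pos_pos mult_pos_pos) auto
      finally show ?thesis .
    qed
    ultimately show "\<exists>y. (?g has_real_derivative y) (at x) \<and> y > 0" by blast
  next
    show "continuous_on {0..s} ?g" using assms by (auto intro!: continuous_intros)
  qed
  then show ?thesis by simp
qed

lemma N_lt:
  assumes "0 < s" "s < (1::real)"
  shows "ln (1 + s) - ln (1 - s) < 2 * s / (1 - s^2)"
proof -
  let ?g = "\<lambda>x::real. 2 * x / (1 - x^2) - (ln (1 + x) - ln (1 - x))"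
  have "?g 0 < ?g s"
  proof (rule DERIV_pos_imp_increasing_open[OF assms(1)])
    fix x assume x: "0 < x" "x < s"
    have x2: "1 - x^2 \<noteq> 0" using x assms
      by (metis abs_square_eq_1 less_irrefl abs_of_pos less_trans right_minus_eq)
    have A: "((\<lambda>x. 2 * x / (1 - x^2)) has_real_derivative (2 * (1 - x^2) + 2 * x * (2 * x)) / (1 - x^2)^2) (at x)"
      using x2 by (auto intro!: derivative_eq_intros simp: power2_eq_square)
    have B: "((\<lambda>x. ln (1 + x) - ln (1 - x)) has_real_derivative (1/(1+x) + 1/(1-x))) (at x)"
      using x assms by (auto intro!: derivative_eq_intros)
    have "(?g has_real_derivative (2 * (1 - x^2) + 2 * x * (2 * x)) / (1 - x^2)^2 - (1/(1+x) + 1/(1-x))) (at x)"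
      using DERIV_diff[OF A B] .
    moreover have "(2 * (1 - x^2) + 2 * x * (2 * x)) / (1 - x^2)^2 - (1/(1+x) + 1/(1-x)) > 0"
    proof -
      have "(2 * (1 - x^2) + 2 * x * (2 * x)) / (1 - x^2)^2 - (1/(1+x) + 1/(1-x)) = 4*x^2/((1+x)*(1-x))^2"
      proof -
        have h1: "1+x \<noteq> 0" "1-x \<noteq> 0" using x assms by auto
        have h2: "1 - x^2 = (1+x)*(1-x)" by (simp add: algebra_simps power2_eq_square)
        show ?thesis unfolding h2 using h1
          by (simp add: divide_simps) (simp add: algebra_simps power2_eq_square)
      qed
      also have "\<dots> > 0" using x assms by (intro divide_pos_pos) auto
      finally show ?thesis .
    qed
    ultimately show "\<exists>y. (?g has_real_derivative y) (at x) \<and> y > 0" by blast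
  next
    have "\<forall>x\<in>{0..s}. 1 - x^2 \<noteq> 0" using assms
      by (auto simp: abs_square_eq_1)
    then show "continuous_on {0..s} ?g" using assms by (intro continuous_intros) auto
  qed
  then show ?thesis by simp
qed

lemma d2:
  assumes u: "0 < u" "u < (1::real)"
  shows "((\<lambda>u. u * (ln (1 + sqrt(1-u\<^sup>2)) - ln (1 - sqrt(1-u\<^sup>2))) / (2 * sqrt(1-u\<^sup>2) * ln 2))
     has_real_derivative (ln (1 + sqrt(1-u\<^sup>2)) - ln (1 - sqrt(1-u\<^sup>2)) - 2 * sqrt(1-u\<^sup>2)) / (2 * sqrt(1-u\<^sup>2)^3 * ln 2)) (at u)"
proof -
  define s where "s = sqrt(1-u\<^sup>2)"
  have s0: "0 < s" "s < 1" using u unfolding s_def by (auto simp: power_less_one_iff real_sqrt_less_iff)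
  have ss: "s^2 = 1 - u^2" unfolding s_def using u by (simp add: abs_square_less_1 less_imp_le)
  have p: "((\<lambda>u. 1 - u\<^sup>2) has_real_derivative -(2*u)) (at u)"
    by (auto intro!: derivative_eq_intros)
  have sq: "((\<lambda>u. sqrt(1-u\<^sup>2)) has_real_derivative -u/s) (at u)"
    using DERIV_chain2[OF DERIV_real_sqrt p] u s0 unfolding s_def
    by (auto simp: field_simps abs_square_less_1)
  have B: "((\<lambda>x. ln (1 + x) - ln (1 - x)) has_real_derivative (1/(1+s) + 1/(1-s))) (at s)"
    using s0 by (auto intro!: derivative_eq_intros)
  have hN: "((\<lambda>u. ln (1 + sqrt(1-u\<^sup>2)) - ln (1 - sqrt(1-u\<^sup>2))) has_real_derivative (1/(1+s) + 1/(1-s)) * (-u/s)) (at u)"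
    using DERIV_chain2[OF B[unfolded s_def] sq[unfolded s_def]] unfolding s_def .
  have hD: "((\<lambda>u. u / sqrt(1-u\<^sup>2)) has_real_derivative (1 * s - u * (-u/s)) / (s * s)) (at u)"
    using DERIV_divide[OF DERIV_ident sq[unfolded s_def]] s0 unfolding s_def by simp
  have hM: "((\<lambda>u. u / sqrt(1-u\<^sup>2) * (ln (1 + sqrt(1-u\<^sup>2)) - ln (1 - sqrt(1-u\<^sup>2))) / (2 * ln 2)) has_real_derivative
     ((1 * s - u * (-u/s)) / (s * s) * (ln (1 + s) - ln (1 - s)) + (1/(1+s) + 1/(1-s)) * (-u/s) * (u / s)) / (2 * ln 2)) (at u)"
    using DERIV_cdivide[OF DERIV_mult[OF hD hN], where c="2 * ln 2"] unfolding s_def .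
  have feq: "(\<lambda>u. u / sqrt(1-u\<^sup>2) * (ln (1 + sqrt(1-u\<^sup>2)) - ln (1 - sqrt(1-u\<^sup>2))) / (2 * ln 2))
     = (\<lambda>u. u * (ln (1 + sqrt(1-u\<^sup>2)) - ln (1 - sqrt(1-u\<^sup>2))) / (2 * sqrt(1-u\<^sup>2) * ln 2))"
    by (rule ext) (simp add: mult.commute mult.left_commute)
  have r1: "1/(1+s) + 1/(1-s) = 2/(u*u)"
  proof -
    have "1/(1+s) + 1/(1-s) = 2/(1 - s^2)" using s0 by (simp add: field_simps power2_eq_square)
    then show ?thesis using ss by (simp add: power2_eq_square)
  qed
  have ln2: "ln (2::real) > 0" by simp
  have veq: "((1 * s - u * (-u/s)) / (s * s) * (ln (1 + s) - ln (1 - s)) + (1/(1+s) + 1/(1-s)) * (-u/s) * (u / s)) / (2 * ln 2)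
    = (ln (1 + s) - ln (1 - s) - 2 * s) / (2 * s^3 * ln 2)"
    unfolding r1 using s0 u ln2 ss
    by (simp add: field_simps power2_eq_square power3_eq_cube)
  show ?thesis using hM[unfolded feq veq] unfolding s_def .
qed

lemma phi_eq:
  assumes u: "0 < u" "u < (1::real)"
  shows "phi u = (-((1 - sqrt(1-u\<^sup>2))/2)*ln ((1 - sqrt(1-u\<^sup>2))/2)
          - (1-(1 - sqrt(1-u\<^sup>2))/2)*ln (1-(1 - sqrt(1-u\<^sup>2))/2))/ln 2"
proof -
  define s where "s = sqrt(1-u\<^sup>2)"
  have s0: "0 < s" "s < 1" using u unfolding s_def by (auto simp: power_less_one_iff real_sqrt_less_iff)
  have q: "(1 - s)/2 \<noteq> 0" "(1-s)/2 \<noteq> 1" using s0 by auto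
  show ?thesis unfolding phi_def bin_entropy_def s_def[symmetric] using q
    by (simp add: log_def diff_divide_distrib)
qed

theorem lemma1:
  shows "(\<forall>u\<in>{0<..<1::real}. phi differentiable (at u)
            \<and> (deriv phi) differentiable (at u))
         \<and> (\<forall>u\<in>{0<..<1::real}. 0 < deriv (deriv phi) u
            \<and> deriv (deriv phi) u < deriv phi u / u)"
proof -
  define F where "F = (\<lambda>u::real. (-((1 - sqrt(1-u\<^sup>2))/2)*ln ((1 - sqrt(1-u\<^sup>2))/2)
          - (1-(1 - sqrt(1-u\<^sup>2))/2)*ln (1-(1 - sqrt(1-u\<^sup>2))/2))/ln 2)"
  define f1 where "f1 = (\<lambda>u::real. u * (ln (1 + sqrt(1-u\<^sup>2)) - ln (1 - sqrt(1-u\<^sup>2))) / (2 * sqrt(1-u\<^sup>2) * ln 2))"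
  define f2 where "f2 = (\<lambda>u::real. (ln (1 + sqrt(1-u\<^sup>2)) - ln (1 - sqrt(1-u\<^sup>2)) - 2 * sqrt(1-u\<^sup>2)) / (2 * sqrt(1-u\<^sup>2)^3 * ln 2))"
  have dphi: "(phi has_real_derivative f1 u) (at u)" if "u \<in> {0<..<1}" for u
  proof (rule has_field_derivative_transform_within_open[of F _ _ "{0<..<1}"])
    show "(F has_real_derivative f1 u) (at u)" using d1 that unfolding F_def f1_def by auto
    show "F x = phi x" if "x \<in> {0<..<1}" for x using phi_eq that unfolding F_def by auto
  qed (use that in auto)
  have dp: "deriv phi u = f1 u" if "u \<in> {0<..<1}" for u using dphi[OF that] by (rule DERIV_imp_deriv)
  have ddphi: "(deriv phi has_real_derivative f2 u) (at u)" if "u \<in> {0<..<1}" for u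
  proof (rule has_field_derivative_transform_within_open[of f1 _ _ "{0<..<1}"])
    show "(f1 has_real_derivative f2 u) (at u)" using d2 that unfolding f1_def f2_def by auto
    show "f1 x = deriv phi x" if "x \<in> {0<..<1}" for x using dp that by auto
  qed (use that in auto)
  have ddp: "deriv (deriv phi) u = f2 u" if "u \<in> {0<..<1}" for u using ddphi[OF that] by (rule DERIV_imp_deriv)
  have part1: "\<forall>u\<in>{0<..<1::real}. phi differentiable (at u) \<and> (deriv phi) differentiable (at u)"
    using dphi ddphi real_differentiable_def by blast
  have part2: "0 < f2 u \<and> f2 u < f1 u / u" if u: "0 < u" "u < 1" for u
  proof -
    define s where "s = sqrt(1-u\<^sup>2)"
    define N where "N = ln (1 + s) - ln (1 - s)"
    have s0: "0 < s" "s < 1" using u unfolding s_def by (auto simp: power_less_one_iff real_sqrt_less_iff)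
    have ln2: "ln (2::real) > 0" by simp
    have g: "2 * s < N" unfolding N_def using N_gt[OF s0] .
    have l: "N < 2 * s / (1 - s^2)" unfolding N_def using N_lt[OF s0] .
    have s2: "0 < 1 - s^2" using s0 by (simp add: abs_square_less_1)
    have l2: "N * (1 - s^2) < 2 * s" using l s2 by (simp add: field_simps)
    have f2e: "f2 u = (N - 2 * s) / (2 * s^3 * ln 2)" unfolding f2_def N_def s_def ..
    have f1e: "f1 u / u = N / (2 * s * ln 2)" unfolding f1_def N_def s_def[symmetric] using u by simp
    have "0 < f2 u" unfolding f2e using g s0 ln2 by (intro divide_pos_pos) auto
    moreover have "f2 u < f1 u / u"
    proof -
      have "N - 2 * s < N * s^2" using l2 by (simp add: algebra_simps)
      then have "(N - 2 * s) / (2 * s^3 * ln 2) < N * s^2 / (2 * s^3 * ln 2)"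
        using s0 ln2 by (intro divide_strict_right_mono) auto
      also have "N * s^2 / (2 * s^3 * ln 2) = N / (2 * s * ln 2)" using s0
        by (simp add: field_simps power2_eq_square power3_eq_cube)
      finally show ?thesis unfolding f2e f1e .
    qed
    ultimately show ?thesis ..
  qed
  show ?thesis using part1 part2 dp ddp by auto
qed
end
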